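(* Let $X,X'$ be second countable locally compact Hausdorff spaces, $T'\colon X'\to X'$ a local homeomorphism, $T\colon X\to X$ a continuous locally injective map, and $\pi\colon X'\to X$ a proper continuous surjection with $\pi\circ T'=T\circ\pi$. Then the following are equivalent: (a) there exists $\mathscr X\subseteq X$ with $T^{-1}(\mathscr X)=\mathscr X$ such that $\mathscr X$ is co-meagre in $X$, $\pi^{-1}(\mathscr X)$ is co-meagre in $X'$, and $\pi$ restricts to a bijection $\pi^{-1}(\mathscr X)\to\mathscr X$; (b) the set $X'_0=\{x'\in X':|\pi^{-1}(\pi(x'))|=1\}$ is dense in $X'$.
   Context: A subset is co-meagre if its complement is meagre, i.e. a countable union of sets whose closures have empty interior. *)

theory Defs
  imports "HOL-Analysis.Analysis"
begin

definition nowhere_dense_in :: "'a topology \<Rightarrow> 'a set \<Rightarrow> bool" where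
  "nowhere_dense_in X S \<longleftrightarrow> S \<subseteq> topspace X \<and> X interior_of (X closure_of S) = {}"

definition meagre_in :: "'a topology \<Rightarrow> 'a set \<Rightarrow> bool" where
  "meagre_in X S \<longleftrightarrow> (\<exists>\<F>. countable \<F> \<and> (\<forall>N\<in>\<F>. nowhere_dense_in X N) \<and> S = \<Union>\<F>)"

definition comeagre_in :: "'a topology \<Rightarrow> 'a set \<Rightarrow> bool" where
  "comeagre_in X S \<longleftrightarrow> S \<subseteq> topspace X \<and> meagre_in X (topspace X - S)"

definition local_homeomorphism :: "'a topology \<Rightarrow> 'b topology \<Rightarrow> ('a \<Rightarrow> 'b) \<Rightarrow> bool" where
  "local_homeomorphism X Y f \<longleftrightarrow> continuous_map X Y f \<and>
     (\<forall>x\<in>topspace X. \<exists>U. openin X U \<and> x \<in> U \<and> openin Y (f ` U) \<and>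
        homeomorphic_map (subtopology X U) (subtopology Y (f ` U)) f)"

definition locally_injective :: "'a topology \<Rightarrow> ('a \<Rightarrow> 'b) \<Rightarrow> bool" where
  "locally_injective X f \<longleftrightarrow> (\<forall>x\<in>topspace X. \<exists>U. openin X U \<and> x \<in> U \<and> inj_on f U)"

end

theory Submission
  imports Defs
begin

lemma nowhere_dense_mono:
  assumes "nowhere_dense_in X N" "A \<subseteq> N" shows "nowhere_dense_in X A"
proof -
  have "X interior_of (X closure_of A) \<subseteq> X interior_of (X closure_of N)"
    by (intro interior_of_mono closure_of_mono assms(2))
  then show ?thesis using assms unfolding nowhere_dense_in_def by auto
qed

lemma meagre_subset_topspace: "meagre_in X S \<Longrightarrow> S \<subseteq> topspace X"
  unfolding meagre_in_def nowhere_dense_in_def by blast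

lemma meagre_mono:
  assumes "meagre_in X S" "A \<subseteq> S" shows "meagre_in X A"
proof -
  obtain F where F: "countable F" "\<forall>N\<in>F. nowhere_dense_in X N" "S = \<Union>F"
    using assms(1) unfolding meagre_in_def by blast
  show ?thesis unfolding meagre_in_def
  proof (intro exI conjI)
    show "countable ((\<lambda>N. N \<inter> A) ` F)" using F by simp
    show "\<forall>N\<in>(\<lambda>N. N \<inter> A) ` F. nowhere_dense_in X N"
      using F nowhere_dense_mono by blast
    show "A = \<Union>((\<lambda>N. N \<inter> A) ` F)" using F assms(2) by blast
  qed
qed

lemma meagre_UN:
  assumes "countable I" "\<And>i. i \<in> I \<Longrightarrow> meagre_in X (A i)"
  shows "meagre_in X (\<Union>i\<in>I. A i)"
proof -
  have "\<forall>i\<in>I. \<exists>F. countable F \<and> (\<forall>N\<in>F. nowhere_dense_in X N) \<and> A i = \<Union>F"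
    using assms(2) unfolding meagre_in_def by blast
  then have "\<exists>F. \<forall>i\<in>I. countable (F i) \<and> (\<forall>N\<in>F i. nowhere_dense_in X N) \<and> A i = \<Union>(F i)"
    by (rule bchoice)
  then obtain F where F: "\<forall>i\<in>I. countable (F i) \<and> (\<forall>N\<in>F i. nowhere_dense_in X N) \<and> A i = \<Union>(F i)"
    by (elim exE)
  have Aeq: "A i = \<Union>(F i)" if "i \<in> I" for i using F that by blast
  have "(\<Union>i\<in>I. A i) = (\<Union>i\<in>I. \<Union>(F i))" using Aeq by simp
  also have "\<dots> = \<Union>(\<Union>i\<in>I. F i)" by blast
  finally have eq: "(\<Union>i\<in>I. A i) = \<Union>(\<Union>i\<in>I. F i)" .
  show ?thesis unfolding meagre_in_def
  proof (intro exI conjI)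
    show "countable (\<Union>i\<in>I. F i)" using F assms(1) by (simp add: countable_UN)
    show "\<forall>N\<in>(\<Union>i\<in>I. F i). nowhere_dense_in X N" using F by blast
  qed (rule eq)
qed

lemma closed_nowhere_dense:
  assumes "closedin X N" "X interior_of N = {}" shows "nowhere_dense_in X N"
  using assms closure_of_closedin closedin_subset unfolding nowhere_dense_in_def by metis

lemma meagre_closed_cover:
  assumes "countable G" "\<And>C. C \<in> G \<Longrightarrow> closedin X C \<and> X interior_of C = {}" "S \<subseteq> \<Union>G"
  shows "meagre_in X S"
proof -
  have "meagre_in X (\<Union>G)" unfolding meagre_in_def
    using assms(1,2) closed_nowhere_dense by (intro exI[of _ G]) blast
  then show ?thesis using meagre_mono assms(3) by blast
qed

lemma comeagre_dense:
  assumes "locally_compact_space X" "Hausdorff_space X" "comeagre_in X S"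
  shows "X closure_of S = topspace X"
proof -
  have "meagre_in X (topspace X - S)" using assms(3) unfolding comeagre_in_def by (rule conjunct2)
  then have "\<exists>F. countable F \<and> (\<forall>N\<in>F. nowhere_dense_in X N) \<and> topspace X - S = \<Union>F"
    unfolding meagre_in_def by assumption
  then obtain F where F: "countable F" "\<forall>N\<in>F. nowhere_dense_in X N" "topspace X - S = \<Union>F"
    by (elim exE conjE)
  have "X interior_of \<Union>((\<lambda>N. X closure_of N) ` F) = {}"
  proof (rule Baire_category_alt)
    show "completely_metrizable_space X \<or> locally_compact_space X \<and> regular_space X"
      using assms(1,2) locally_compact_Hausdorff_imp_regular_space by blast
    show "countable ((\<lambda>N. X closure_of N) ` F)" using F(1) by simp
    fix T assume "T \<in> (\<lambda>N. X closure_of N) ` F"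
    then obtain N where "N \<in> F" "T = X closure_of N" by blast
    then show "closedin X T \<and> X interior_of T = {}" using F(2) unfolding nowhere_dense_in_def by simp
  qed
  moreover have "topspace X - S \<subseteq> \<Union>((\<lambda>N. X closure_of N) ` F)"
  proof
    fix x assume "x \<in> topspace X - S"
    then obtain N where N: "N \<in> F" "x \<in> N" using F(3) by blast
    then have "N \<subseteq> topspace X" using F(2) unfolding nowhere_dense_in_def by blast
    then have "x \<in> X closure_of N" using N closure_of_subset by blast
    then show "x \<in> \<Union>((\<lambda>N. X closure_of N) ` F)" using N by blast
  qed
  ultimately have "X interior_of (topspace X - S) = {}"
    using interior_of_mono by blast
  then show ?thesis by (simp add: closure_of_eq_topspace)
qed

lemma preimage_nowhere_dense:
  assumes "continuous_map X Y f"
    and imgint: "\<And>V. openin X V \<Longrightarrow> V \<noteq> {} \<Longrightarrow> Y interior_of (f ` V) \<noteq> {}"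
    and "nowhere_dense_in Y N"
  shows "nowhere_dense_in X {x \<in> topspace X. f x \<in> N}"
proof -
  define C where "C = Y closure_of N"
  have C: "closedin Y C" "Y interior_of C = {}" "N \<subseteq> C"
    using assms(3) unfolding C_def nowhere_dense_in_def by (auto simp: closure_of_subset)
  define P where "P = {x \<in> topspace X. f x \<in> C}"
  have "closedin X P" unfolding P_def using closedin_continuous_map_preimage assms(1) C(1) by blast
  then have cl: "X closure_of {x \<in> topspace X. f x \<in> N} \<subseteq> P"
    using C(3) unfolding P_def by (intro closure_of_minimal) auto
  define V where "V = X interior_of (X closure_of {x \<in> topspace X. f x \<in> N})"
  have "V = {}"
  proof (rule ccontr)
    assume "V \<noteq> {}"
    moreover have "openin X V" unfolding V_def by simp
    ultimately have "Y interior_of (f ` V) \<noteq> {}" using imgint by blast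
    moreover have "f ` V \<subseteq> C" using cl interior_of_subset[of X] unfolding V_def P_def by blast
    ultimately show False using C(2) interior_of_mono by blast
  qed
  then show ?thesis unfolding nowhere_dense_in_def V_def by auto
qed

lemma preimage_meagre:
  assumes "continuous_map X Y f"
    and imgint: "\<And>V. openin X V \<Longrightarrow> V \<noteq> {} \<Longrightarrow> Y interior_of (f ` V) \<noteq> {}"
    and "meagre_in Y M"
  shows "meagre_in X {x \<in> topspace X. f x \<in> M}"
proof -
  obtain F where F: "countable F" "\<forall>N\<in>F. nowhere_dense_in Y N" "M = \<Union>F"
    using assms(3) unfolding meagre_in_def by blast
  have "{x \<in> topspace X. f x \<in> M} = (\<Union>N\<in>F. {x \<in> topspace X. f x \<in> N})" using F by auto
  moreover have "meagre_in X (\<Union>N\<in>F. {x \<in> topspace X. f x \<in> N})"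
    unfolding meagre_in_def
  proof (intro exI conjI)
    show "countable ((\<lambda>N. {x \<in> topspace X. f x \<in> N}) ` F)" using F(1) by simp
    show "\<forall>N'\<in>(\<lambda>N. {x \<in> topspace X. f x \<in> N}) ` F. nowhere_dense_in X N'"
      using F(2) preimage_nowhere_dense[OF assms(1) imgint] by blast
  qed simp
  ultimately show ?thesis by simp
qed

lemma image_nowhere_dense_meagre:
  assumes "second_countable X" "locally_compact_space X" "Hausdorff_space X"
    "continuous_map X X T" "locally_injective X T" "nowhere_dense_in X N"
  shows "meagre_in X (T ` N)"
proof -
  obtain B where B: "countable B" "\<forall>V \<in> B. openin X V"
    "\<And>U x. openin X U \<Longrightarrow> x \<in> U \<Longrightarrow> (\<exists>V \<in> B. x \<in> V \<and> V \<subseteq> U)"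
    using assms(1) unfolding second_countable_def by metis
  define B' where "B' = {b\<in>B. \<exists>K U. b \<subseteq> K \<and> K \<subseteq> U \<and> compactin X K \<and> openin X U \<and> inj_on T U}"
  have Ntop: "N \<subseteq> topspace X" using assms(6) unfolding nowhere_dense_in_def by blast
  have nb: "neighbourhood_base_of (compactin X) X"
    using assms(2,3) locally_compact_space_neighbourhood_base by blast
  have cover: "N \<subseteq> \<Union>B'"
  proof
    fix x assume "x \<in> N"
    then have x: "x \<in> topspace X" using Ntop by blast
    then obtain U where U: "openin X U" "x \<in> U" "inj_on T U"
      using assms(5) unfolding locally_injective_def by blast
    then obtain V K where VK: "openin X V" "compactin X K" "x \<in> V" "V \<subseteq> K" "K \<subseteq> U"
      using nb unfolding neighbourhood_base_of by metis
    then obtain b where "b \<in> B" "x \<in> b" "b \<subseteq> V" using B(3) by metis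
    then have "b \<in> B'" unfolding B'_def using VK U by blast
    then show "x \<in> \<Union>B'" using \<open>x \<in> b\<close> by blast
  qed
  have piece: "nowhere_dense_in X (T ` (N \<inter> b))" if "b \<in> B'" for b
  proof -
    have "b \<in> B" "\<exists>K U. b \<subseteq> K \<and> K \<subseteq> U \<and> compactin X K \<and> openin X U \<and> inj_on T U"
      using that unfolding B'_def by simp_all
    then obtain K U where KU: "b \<subseteq> K" "K \<subseteq> U" "compactin X K" "openin X U" "inj_on T U" "b \<in> B"
      by blast
    have bo: "openin X b" using B(2) KU(6) by blast
    define C where "C = X closure_of N"
    have C: "closedin X C" "X interior_of C = {}" "N \<subseteq> C"
      using assms(6) unfolding C_def nowhere_dense_in_def by (auto simp: closure_of_subset)
    define Z where "Z = T ` (N \<inter> b)"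
    have Ztop: "Z \<subseteq> topspace X" unfolding Z_def using Ntop assms(4)
      using continuous_map_image_subset_topspace[OF assms(4)] by blast
    have "compactin X (T ` (C \<inter> K))"
      using image_compactin[OF closed_Int_compactin[OF C(1) KU(3)] assms(4)] .
    then have CKc: "closedin X (T ` (C \<inter> K))" using compactin_imp_closedin assms(3) by blast
    have "Z \<subseteq> T ` (C \<inter> K)" unfolding Z_def using C(3) KU(1) by blast
    then have clZ: "X closure_of Z \<subseteq> T ` (C \<inter> K)" using CKc closure_of_minimal by blast
    define W where "W = X interior_of (X closure_of Z)"
    have "W = {}"
    proof (rule ccontr)
      assume "W \<noteq> {}"
      have Wo: "openin X W" unfolding W_def by simp
      have WZ: "W \<subseteq> X closure_of Z" unfolding W_def by (rule interior_of_subset)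
      have "W \<inter> Z \<noteq> {}"
      proof
        assume "W \<inter> Z = {}"
        then have "W \<inter> X closure_of Z = {}" using openin_Int_closure_of_eq_empty[OF Wo] by blast
        then show False using WZ \<open>W \<noteq> {}\<close> by blast
      qed
      then obtain n where n: "n \<in> N" "n \<in> b" "T n \<in> W" unfolding Z_def by blast
      define Op where "Op = {x \<in> topspace X. T x \<in> W} \<inter> b"
      have Oo: "openin X Op" unfolding Op_def
        using openin_continuous_map_preimage[OF assms(4) Wo] bo by blast
      have "n \<in> Op" unfolding Op_def using n Ntop by blast
      have "\<not> Op \<subseteq> C"
        using C(2) Oo \<open>n \<in> Op\<close> interior_of_eq_empty by blast
      then obtain z where z: "z \<in> Op" "z \<notin> C" by blast
      then have "T z \<in> T ` (C \<inter> K)" using WZ clZ unfolding Op_def by blast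
      then obtain c where c: "c \<in> C" "c \<in> K" "T z = T c" by blast
      have "z \<in> U" "c \<in> U" using z KU c unfolding Op_def by blast+
      then have "z = c" using KU(5) c(3) inj_on_def by metis
      then show False using z c by blast
    qed
    then show ?thesis unfolding nowhere_dense_in_def W_def Z_def using Ztop Z_def by blast
  qed
  have "T ` N = (\<Union>b\<in>B'. T ` (N \<inter> b))" using cover by blast
  moreover have "meagre_in X (\<Union>b\<in>B'. T ` (N \<inter> b))"
  proof (rule meagre_UN)
    show "countable B'" unfolding B'_def using B(1) by simp
    show "meagre_in X (T ` (N \<inter> b))" if "b \<in> B'" for b
      unfolding meagre_in_def using piece[OF that] by (intro exI[of _ "{T ` (N \<inter> b)}"]) auto
  qed
  ultimately show ?thesis by simp
qed

lemma image_meagre: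
  assumes "second_countable X" "locally_compact_space X" "Hausdorff_space X"
    "continuous_map X X T" "locally_injective X T" "meagre_in X M"
  shows "meagre_in X (T ` M)"
proof -
  obtain F where F: "countable F" "\<forall>N\<in>F. nowhere_dense_in X N" "M = \<Union>F"
    using assms(6) unfolding meagre_in_def by blast
  have "T ` M = (\<Union>N\<in>F. T ` N)" using F by auto
  moreover have "meagre_in X (\<Union>N\<in>F. T ` N)"
    using meagre_UN[OF F(1)] image_nowhere_dense_meagre[OF assms(1-5)] F(2) by blast
  ultimately show ?thesis by simp
qed

theorem corollary4p13:
  fixes X :: "'a topology" and X' :: "'b topology"
    and T :: "'a \<Rightarrow> 'a" and T' :: "'b \<Rightarrow> 'b" and \<pi> :: "'b \<Rightarrow> 'a"
  assumes "second_countable X" "locally_compact_space X" "Hausdorff_space X"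
    and "second_countable X'" "locally_compact_space X'" "Hausdorff_space X'"
    and "local_homeomorphism X' X' T'"
    and "continuous_map X X T" "locally_injective X T"
    and "proper_map X' X \<pi>" "continuous_map X' X \<pi>" "\<pi> ` topspace X' = topspace X"
    and "\<And>x'. x' \<in> topspace X' \<Longrightarrow> \<pi> (T' x') = T (\<pi> x')"
  shows "(\<exists>S. S \<subseteq> topspace X \<and> {x \<in> topspace X. T x \<in> S} = S
              \<and> comeagre_in X S
              \<and> comeagre_in X' {x' \<in> topspace X'. \<pi> x' \<in> S}
              \<and> bij_betw \<pi> {x' \<in> topspace X'. \<pi> x' \<in> S} S)
     \<longleftrightarrow> X' closure_of {x' \<in> topspace X'. card {y' \<in> topspace X'. \<pi> y' = \<pi> x'} = 1}
           = topspace X'"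
  proof
  assume "\<exists>S. S \<subseteq> topspace X \<and> {x \<in> topspace X. T x \<in> S} = S
              \<and> comeagre_in X S
              \<and> comeagre_in X' {x' \<in> topspace X'. \<pi> x' \<in> S}
              \<and> bij_betw \<pi> {x' \<in> topspace X'. \<pi> x' \<in> S} S"
  then obtain S where S: "comeagre_in X' {x' \<in> topspace X'. \<pi> x' \<in> S}"
      "bij_betw \<pi> {x' \<in> topspace X'. \<pi> x' \<in> S} S"
    by blast
  define S' where "S' = {x' \<in> topspace X'. \<pi> x' \<in> S}"
  define X0 where "X0 = {x' \<in> topspace X'. card {y' \<in> topspace X'. \<pi> y' = \<pi> x'} = 1}"
  have inj: "inj_on \<pi> S'" using S(2) unfolding S'_def by (rule bij_betw_imp_inj_on)
  have "S' \<subseteq> X0"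
  proof
    fix x' assume x': "x' \<in> S'"
    have "{y' \<in> topspace X'. \<pi> y' = \<pi> x'} = {x'}"
    proof (intro equalityI subsetI)
      fix y' assume y': "y' \<in> {y' \<in> topspace X'. \<pi> y' = \<pi> x'}"
      then have "y' \<in> S'" "\<pi> y' = \<pi> x'" using x' unfolding S'_def by auto
      then have "y' = x'" using inj x' unfolding inj_on_def by blast
      then show "y' \<in> {x'}" by simp
    next
      fix y' assume "y' \<in> {x'}"
      then show "y' \<in> {y' \<in> topspace X'. \<pi> y' = \<pi> x'}" using x' unfolding S'_def by auto
    qed
    then show "x' \<in> X0" using x' unfolding X0_def S'_def by auto
  qed
  have "X' closure_of S' = topspace X'"
    using comeagre_dense[OF assms(5,6)] S(1) unfolding S'_def by blast
  then have "topspace X' \<subseteq> X' closure_of X0" using closure_of_mono[OF \<open>S' \<subseteq> X0\<close>] by blast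
  then have "X' closure_of X0 = topspace X'" using closure_of_subset_topspace[of X' X0] by auto
  then show "X' closure_of {x' \<in> topspace X'. card {y' \<in> topspace X'. \<pi> y' = \<pi> x'} = 1} = topspace X'"
    unfolding X0_def .
next
  assume D: "X' closure_of {x' \<in> topspace X'. card {y' \<in> topspace X'. \<pi> y' = \<pi> x'} = 1} = topspace X'"
  define X0 where "X0 = {x' \<in> topspace X'. card {y' \<in> topspace X'. \<pi> y' = \<pi> x'} = 1}"
  have D0: "X' closure_of X0 = topspace X'" using D unfolding X0_def .
  have fib: "y' = x'" if "x' \<in> X0" "y' \<in> topspace X'" "\<pi> y' = \<pi> x'" for x' y'
  proof -
    have "card {y' \<in> topspace X'. \<pi> y' = \<pi> x'} = 1" using that(1) unfolding X0_def by blast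
    moreover have "x' \<in> {y' \<in> topspace X'. \<pi> y' = \<pi> x'}" using that(1) unfolding X0_def by blast
    ultimately have "{y' \<in> topspace X'. \<pi> y' = \<pi> x'} = {x'}" by (metis card_1_singletonE singletonD)
    then show ?thesis using that(2,3) by blast
  qed
  have meet: "\<exists>x'\<in>Q. x' \<in> X0" if "openin X' Q" "Q \<noteq> {}" for Q
  proof (rule ccontr)
    assume "\<not> (\<exists>x'\<in>Q. x' \<in> X0)"
    then have "Q \<inter> X0 = {}" by blast
    then have "Q \<inter> X' closure_of X0 = {}" using openin_Int_closure_of_eq_empty[OF that(1)] by blast
    then show False using D0 openin_subset[OF that(1)] that(2) by blast
  qed
  have pimap: "\<pi> x' \<in> topspace X" if "x' \<in> topspace X'" for x'
    using assms(12) that by blast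
  have Tmap: "T x \<in> topspace X" if "x \<in> topspace X" for x
    using continuous_map_image_subset_topspace[OF assms(8)] that by blast
  have clmap: "closed_map X' X \<pi>" using assms(10) proper_imp_closed_map by blast
  have L2: "X interior_of (\<pi> ` Q) \<noteq> {}" if th: "openin X' Q" "Q \<noteq> {}" for Q
  proof -
    obtain x' where x': "x' \<in> Q" "x' \<in> X0" using meet[OF th] by blast
    have x'top: "x' \<in> topspace X'" using x' th(1) openin_subset by blast
    define K where "K = \<pi> ` (topspace X' - Q)"
    have "closedin X' (topspace X' - Q)" using th(1) by blast
    then have "closedin X K" unfolding K_def using clmap closed_map_def by blast
    then have Wo: "openin X (topspace X - K)" by blast
    have "\<pi> x' \<notin> K"
    proof
      assume "\<pi> x' \<in> K"
      then obtain y where y: "\<pi> x' = \<pi> y" "y \<in> topspace X' - Q" unfolding K_def by (rule imageE)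
      then have "y = x'" using fib[OF x'(2), of y] by simp
      then show False using y x'(1) by simp
    qed
    then have "\<pi> x' \<in> topspace X - K" using pimap x'top by blast
    moreover have "topspace X - K \<subseteq> \<pi> ` Q"
    proof
      fix w assume w: "w \<in> topspace X - K"
      then have "w \<in> \<pi> ` topspace X'" using assms(12) by simp
      then obtain y where y: "w = \<pi> y" "y \<in> topspace X'" by (rule imageE)
      then have "y \<in> Q" using w unfolding K_def by blast
      then show "w \<in> \<pi> ` Q" using y by simp
    qed
    ultimately show ?thesis using interior_of_maximal Wo by blast
  qed
  have L4: "X interior_of (T ` V) \<noteq> {}" if th: "openin X V" "V \<noteq> {}" for V
  proof -
    obtain v where v: "v \<in> V" using th(2) by blast
    then have "v \<in> topspace X" using th(1) openin_subset by blast
    then have "v \<in> \<pi> ` topspace X'" using assms(12) by simp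
    then obtain x' where x'0: "v = \<pi> x'" "x' \<in> topspace X'" by (rule imageE)
    then have x': "x' \<in> topspace X'" "\<pi> x' = v" by simp_all
    obtain U where U: "openin X' U" "x' \<in> U" "openin X' (T' ` U)"
        "homeomorphic_map (subtopology X' U) (subtopology X' (T' ` U)) T'"
      using assms(7) x'(1) unfolding local_homeomorphism_def by blast
    define P where "P = {y \<in> topspace X'. \<pi> y \<in> V} \<inter> U"
    have pre: "openin X' {y \<in> topspace X'. \<pi> y \<in> V}"
      using openin_continuous_map_preimage[OF assms(11) th(1)] .
    have "openin (subtopology X' U) P" unfolding P_def openin_subtopology using pre by blast
    then have "openin (subtopology X' (T' ` U)) (T' ` P)"
      using homeomorphic_imp_open_map[OF U(4)] unfolding open_map_def by blast
    then have TPo: "openin X' (T' ` P)" using openin_trans_full U(3) by blast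
    have "x' \<in> P" unfolding P_def using x' v U(2) by blast
    then have "T' ` P \<noteq> {}" by blast
    then have "X interior_of (\<pi> ` T' ` P) \<noteq> {}" using L2 TPo by blast
    moreover have "\<pi> ` T' ` P \<subseteq> T ` V" using assms(13) unfolding P_def by force
    ultimately show ?thesis using interior_of_mono by blast
  qed
  define Bad where "Bad = {x \<in> topspace X. \<exists>y1 y2. y1 \<in> topspace X' \<and> y2 \<in> topspace X' \<and> y1 \<noteq> y2 \<and> \<pi> y1 = x \<and> \<pi> y2 = x}"
  obtain B where B: "countable B" "\<forall>V \<in> B. openin X' V"
    "\<And>U x. openin X' U \<Longrightarrow> x \<in> U \<Longrightarrow> (\<exists>V \<in> B. x \<in> V \<and> V \<subseteq> U)"
    using assms(4) unfolding second_countable_def by metis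
  define FU where "FU U = \<pi> ` (X' closure_of U) \<inter> \<pi> ` (topspace X' - U)" for U
  have BadM: "meagre_in X Bad"
  proof (rule meagre_closed_cover)
    show "countable (FU ` B)" using B(1) by simp
    show "closedin X C \<and> X interior_of C = {}" if CB: "C \<in> FU ` B" for C
    proof -
      obtain U where U: "U \<in> B" "C = FU U" using CB by blast
      have Uo: "openin X' U" using B(2) U(1) by blast
      have c1: "closedin X (\<pi> ` (X' closure_of U))" using clmap closed_map_def closedin_closure_of by blast
      have "closedin X' (topspace X' - U)" using Uo by blast
      then have c2: "closedin X (\<pi> ` (topspace X' - U))" using clmap closed_map_def by blast
      have "closedin X C" unfolding U(2) FU_def using c1 c2 by (rule closedin_Int)
      moreover have "X interior_of C = {}"
      proof (rule ccontr)
        assume "X interior_of C \<noteq> {}"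
        then obtain w where w: "w \<in> X interior_of C" by blast
        define W where "W = X interior_of C"
        have Wo: "openin X W" unfolding W_def by simp
        have WC: "W \<subseteq> C" unfolding W_def by (rule interior_of_subset)
        define P where "P = {y \<in> topspace X'. \<pi> y \<in> W}"
        have Po: "openin X' P" unfolding P_def using openin_continuous_map_preimage[OF assms(11) Wo] .
        have "w \<in> topspace X" using w openin_subset[OF Wo] unfolding W_def by blast
        then have "w \<in> \<pi> ` topspace X'" using assms(12) by simp
        then obtain y where y: "w = \<pi> y" "y \<in> topspace X'" by (rule imageE)
        then have "y \<in> P" using w unfolding P_def W_def by simp
        then have "P \<noteq> {}" by blast
        then obtain x1 where x1: "x1 \<in> P" "x1 \<in> X0" using meet[OF Po] by blast
        have "\<pi> x1 \<in> C" using x1 WC unfolding P_def by blast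
        then have "\<pi> x1 \<in> \<pi> ` (X' closure_of U)" "\<pi> x1 \<in> \<pi> ` (topspace X' - U)"
          unfolding U(2) FU_def by simp_all
        then obtain a b where ab0: "\<pi> x1 = \<pi> a" "a \<in> X' closure_of U" "\<pi> x1 = \<pi> b" "b \<in> topspace X' - U"
          by (meson imageE)
        then have ab: "a \<in> X' closure_of U" "\<pi> a = \<pi> x1" "b \<in> topspace X' - U" "\<pi> b = \<pi> x1" by simp_all
        have "a \<in> topspace X'" using closure_of_subset_topspace[of X' U] ab(1) by (rule subsetD)
        then have "a = x1" using fib[OF x1(2)] ab(2) by blast
        have "P \<inter> U \<noteq> {}"
        proof
          assume "P \<inter> U = {}"
          then have "P \<inter> X' closure_of U = {}" using openin_Int_closure_of_eq_empty[OF Po] by blast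
          then show False using x1(1) ab(1) \<open>a = x1\<close> by blast
        qed
        moreover have "openin X' (P \<inter> U)" using Po Uo by blast
        ultimately obtain x2 where x2: "x2 \<in> P \<inter> U" "x2 \<in> X0" using meet by blast
        have "\<pi> x2 \<in> C" using x2 WC unfolding P_def by blast
        then have "\<pi> x2 \<in> \<pi> ` (topspace X' - U)" unfolding U(2) FU_def by simp
        then obtain b2 where b20: "\<pi> x2 = \<pi> b2" "b2 \<in> topspace X' - U" by (rule imageE)
        then have b2: "b2 \<in> topspace X' - U" "\<pi> b2 = \<pi> x2" by simp_all
        then have "b2 = x2" using fib[OF x2(2)] by blast
        then show False using x2 b2 by blast
      qed
      ultimately show ?thesis by blast
    qed
    show "Bad \<subseteq> \<Union>(FU ` B)"
    proof
      fix x assume "x \<in> Bad"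
      then obtain y1 y2 where y: "y1 \<in> topspace X'" "y2 \<in> topspace X'" "y1 \<noteq> y2" "\<pi> y1 = x" "\<pi> y2 = x"
        unfolding Bad_def by blast
      obtain O1 O2 where O: "openin X' O1" "openin X' O2" "y1 \<in> O1" "y2 \<in> O2" "disjnt O1 O2"
        using assms(6) y(1-3) unfolding Hausdorff_space_def by blast
      obtain U where U: "U \<in> B" "y1 \<in> U" "U \<subseteq> O1" using B(3)[OF O(1,3)] by blast
      have "y2 \<notin> U" using U(3) O(4,5) by (auto simp: disjnt_def)
      have "U \<subseteq> topspace X'" using B(2) U(1) openin_subset by blast
      then have "y1 \<in> X' closure_of U" using U(2) closure_of_subset by blast
      then have i1: "\<pi> y1 \<in> \<pi> ` (X' closure_of U)" by (rule imageI)
      have i2: "\<pi> y2 \<in> \<pi> ` (topspace X' - U)" using y(2) \<open>y2 \<notin> U\<close> by (intro imageI) simp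
      have "x \<in> FU U" unfolding FU_def using i1 i2 y(4,5) by simp
      then show "x \<in> \<Union>(FU ` B)" using U(1) by blast
    qed
  qed
  have imgM: "meagre_in X ((T^^m) ` M)" if "meagre_in X M" for m M
  proof (induction m)
    case 0 then show ?case using that by simp
  next
    case (Suc m)
    then have "meagre_in X (T ` (T^^m) ` M)" using image_meagre[OF assms(1,2,3,8,9)] by blast
    then show ?case by (simp add: image_comp)
  qed
  have TM: "meagre_in X {x \<in> topspace X. T x \<in> M}" if "meagre_in X M" for M
    using preimage_meagre[OF assms(8) L4 that] by blast
  have preM: "meagre_in X {x \<in> topspace X. (T^^n) x \<in> M}" if "meagre_in X M" for n M
  proof (induction n)
    case 0
    have "{x \<in> topspace X. (T^^0) x \<in> M} = M" using meagre_subset_topspace[OF that] by auto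
    then show ?case using that by simp
  next
    case (Suc n)
    have "{x \<in> topspace X. (T^^Suc n) x \<in> M} = {x \<in> topspace X. T x \<in> {y \<in> topspace X. (T^^n) y \<in> M}}"
      using Tmap by (auto simp: funpow_swap1)
    then show ?case using TM[OF Suc.IH] by simp
  qed
  define Bad' where "Bad' = (\<Union>n. \<Union>m. {x \<in> topspace X. (T^^n) x \<in> (T^^m) ` Bad})"
  have Bad'M: "meagre_in X Bad'" unfolding Bad'_def
  proof (rule meagre_UN)
    fix n :: nat
    show "meagre_in X (\<Union>m. {x \<in> topspace X. (T^^n) x \<in> (T^^m) ` Bad})"
    proof (rule meagre_UN)
      fix m :: nat
      show "meagre_in X {x \<in> topspace X. (T^^n) x \<in> (T^^m) ` Bad}"
        using preM[OF imgM[OF BadM]] by blast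
    qed simp
  qed simp
  have Bad'top: "Bad' \<subseteq> topspace X" unfolding Bad'_def by blast
  have BadBad': "Bad \<subseteq> Bad'"
  proof
    fix x assume x: "x \<in> Bad"
    then have "x \<in> {x \<in> topspace X. (T^^0) x \<in> (T^^0) ` Bad}" unfolding Bad_def by auto
    then show "x \<in> Bad'" unfolding Bad'_def by blast
  qed
  have inv: "T x \<in> Bad' \<longleftrightarrow> x \<in> Bad'" if x: "x \<in> topspace X" for x
  proof
    assume "T x \<in> Bad'"
    then obtain n m b where nb: "b \<in> Bad" "(T^^n) (T x) = (T^^m) b" unfolding Bad'_def by blast
    then have "(T^^Suc n) x = (T^^m) b" by (simp add: funpow_Suc_right funpow_swap1)
    then have "x \<in> {x \<in> topspace X. (T^^Suc n) x \<in> (T^^m) ` Bad}" using x nb(1) by blast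
    then show "x \<in> Bad'" unfolding Bad'_def by blast
  next
    assume "x \<in> Bad'"
    then obtain n m b where nb: "b \<in> Bad" "(T^^n) x = (T^^m) b" unfolding Bad'_def by blast
    show "T x \<in> Bad'"
    proof (cases n)
      case 0
      then have "(T^^0) (T x) = (T^^Suc m) b" using nb by simp
      then have "T x \<in> {x \<in> topspace X. (T^^0) x \<in> (T^^Suc m) ` Bad}" using Tmap[OF x] nb(1) by blast
      then show ?thesis unfolding Bad'_def by blast
    next
      case (Suc k)
      then have "(T^^k) (T x) = (T^^m) b" using nb by (simp add: funpow_Suc_right funpow_swap1)
      then have "T x \<in> {x \<in> topspace X. (T^^k) x \<in> (T^^m) ` Bad}" using Tmap[OF x] nb(1) by blast
      then show ?thesis unfolding Bad'_def by blast
    qed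
  qed
  define S where "S = topspace X - Bad'"
  show "\<exists>S. S \<subseteq> topspace X \<and> {x \<in> topspace X. T x \<in> S} = S
              \<and> comeagre_in X S
              \<and> comeagre_in X' {x' \<in> topspace X'. \<pi> x' \<in> S}
              \<and> bij_betw \<pi> {x' \<in> topspace X'. \<pi> x' \<in> S} S"
  proof (intro exI conjI)
    show "S \<subseteq> topspace X" unfolding S_def by blast
    show "{x \<in> topspace X. T x \<in> S} = S" unfolding S_def using inv Tmap by blast
    have "topspace X - S = Bad'" unfolding S_def using Bad'top by blast
    then show "comeagre_in X S" unfolding comeagre_in_def using Bad'M \<open>S \<subseteq> topspace X\<close> by simp
    have "topspace X' - {x' \<in> topspace X'. \<pi> x' \<in> S} = {x' \<in> topspace X'. \<pi> x' \<in> Bad'}"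
      unfolding S_def using pimap by blast
    moreover have "meagre_in X' {x' \<in> topspace X'. \<pi> x' \<in> Bad'}"
      using preimage_meagre[OF assms(11) L2 Bad'M] by blast
    ultimately show "comeagre_in X' {x' \<in> topspace X'. \<pi> x' \<in> S}" unfolding comeagre_in_def by simp
    show "bij_betw \<pi> {x' \<in> topspace X'. \<pi> x' \<in> S} S"
      unfolding bij_betw_def
    proof
      show "inj_on \<pi> {x' \<in> topspace X'. \<pi> x' \<in> S}"
      proof (rule inj_onI)
        fix a b assume a: "a \<in> {x' \<in> topspace X'. \<pi> x' \<in> S}" and b: "b \<in> {x' \<in> topspace X'. \<pi> x' \<in> S}"
          and eq: "\<pi> a = \<pi> b"
        have "\<pi> a \<notin> Bad" using a BadBad' unfolding S_def by blast
        show "a = b"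
        proof (rule ccontr)
          assume "a \<noteq> b"
          have at: "a \<in> topspace X'" "b \<in> topspace X'" using a b by simp_all
          have "\<exists>y1 y2. y1 \<in> topspace X' \<and> y2 \<in> topspace X' \<and> y1 \<noteq> y2 \<and> \<pi> y1 = \<pi> a \<and> \<pi> y2 = \<pi> a"
            using at \<open>a \<noteq> b\<close> eq by (intro exI[of _ a] exI[of _ b]) simp
          then have "\<pi> a \<in> Bad" unfolding Bad_def using pimap[OF at(1)] by simp
          then show False using \<open>\<pi> a \<notin> Bad\<close> by simp
        qed
      qed
      show "\<pi> ` {x' \<in> topspace X'. \<pi> x' \<in> S} = S"
      proof
        show "\<pi> ` {x' \<in> topspace X'. \<pi> x' \<in> S} \<subseteq> S" by blast
        show "S \<subseteq> \<pi> ` {x' \<in> topspace X'. \<pi> x' \<in> S}"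
        proof
          fix x assume xS: "x \<in> S"
          then have "x \<in> \<pi> ` topspace X'" using assms(12) \<open>S \<subseteq> topspace X\<close> by auto
          then obtain y where y: "x = \<pi> y" "y \<in> topspace X'" by (rule imageE)
          then show "x \<in> \<pi> ` {x' \<in> topspace X'. \<pi> x' \<in> S}" using xS by blast
        qed
      qed
    qed
  qed
qed

end
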